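(* Let $G=(V,E)$ be an undirected simple graph, let $k\ge 2$ be an integer, and let $e^*\in E$ satisfy $\tau_G(e^* )<k+1$. Then for every vertex $v\in V$, the edge $e^*$ is not contained in any connected component of the $k$-truss of the ego-network $G_{N(v)}$.
   Context: $N(v)$ is the set of neighbors of $v$ and $G_{N(v)}$ is the subgraph of $G$ induced by $N(v)$. For a subgraph $H$ and $e\in E(H)$, $\sup_H(e)$ is the number of triangles of $H$ containing $e$. The trussness of a subgraph $H$ with at least one edge is $\tau(H)=\min_{e\in E(H)}\sup_H(e)+2$, and the trussness of an edge $e$ in $G$ is $\tau_G(e)=\max\{\tau(H'):H'\subseteq G,\ e\in E(H')\}$. For an integer $k\ge 2$, the $k$-truss of a graph $H$ is the subgraph formed by the largest edge set $F\subseteq E(H)$ such that every edge of $F$ lies in at least $k-2$ triangles all of whose edges are in $F$. *)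

theory Defs
  imports Main
begin

definition simple_graph :: "'a set \<Rightarrow> 'a set set \<Rightarrow> bool" where
  "simple_graph V E \<longleftrightarrow> finite V \<and>
     (\<forall>e\<in>E. \<exists>x y. x \<noteq> y \<and> x \<in> V \<and> y \<in> V \<and> e = {x, y})"

definition nbhd :: "'a set set \<Rightarrow> 'a \<Rightarrow> 'a set" where
  "nbhd E v = {w. {v, w} \<in> E}"

definition induced_edges :: "'a set set \<Rightarrow> 'a set \<Rightarrow> 'a set set" where
  "induced_edges E S = {e \<in> E. e \<subseteq> S}"

definition subgraph :: "'a set \<Rightarrow> 'a set set \<Rightarrow> 'a set \<Rightarrow> 'a set set \<Rightarrow> bool" where
  "subgraph V E W F \<longleftrightarrow> W \<subseteq> V \<and> F \<subseteq> E \<and> (\<forall>e\<in>F. e \<subseteq> W)"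

text \<open>sup_H(e): number of triangles of H (edge set F) containing the edge e;
  a triangle containing e = {x,y} corresponds to its third vertex w.\<close>
definition sup_edge :: "'a set set \<Rightarrow> 'a set \<Rightarrow> nat" where
  "sup_edge F e = card {w. w \<notin> e \<and> (\<forall>x\<in>e. {x, w} \<in> F)}"

text \<open>Trussness of a subgraph with edge set F (assumed non-empty).\<close>
definition trussness :: "'a set set \<Rightarrow> nat" where
  "trussness F = Min (sup_edge F ` F) + 2"

definition edge_trussness :: "'a set \<Rightarrow> 'a set set \<Rightarrow> 'a set \<Rightarrow> nat" where
  "edge_trussness V E e =
     Max {trussness F | W F. subgraph V E W F \<and> e \<in> F}"

definition k_truss :: "nat \<Rightarrow> 'a set set \<Rightarrow> 'a set set" where
  "k_truss k E = (GREATEST F. F \<subseteq> E \<and> (\<forall>e\<in>F. k - 2 \<le> sup_edge F e))"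

text \<open>Connected components of the graph formed by an edge set F
  (vertex set: the vertices incident to F). A component is given by its vertex
  set S; its edges are those of F inside S.\<close>
definition adj :: "'a set set \<Rightarrow> 'a \<Rightarrow> 'a \<Rightarrow> bool" where
  "adj F x y \<longleftrightarrow> {x, y} \<in> F"

definition components :: "'a set set \<Rightarrow> 'a set set" where
  "components F = {S. \<exists>u \<in> \<Union>F. S = {w. (adj F)\<^sup>*\<^sup>* u w}}"

definition component_edges :: "'a set set \<Rightarrow> 'a set \<Rightarrow> 'a set set" where
  "component_edges F S = {e \<in> F. e \<subseteq> S}"

end

theory Submission
  imports Defs
begin

lemma sup_edge_pair: "sup_edge F {a,b} = card {w. w \<notin> {a,b} \<and> {a,w} \<in> F \<and> {b,w} \<in> F}"
  unfolding sup_edge_def by simp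

lemma finE: assumes "simple_graph V E" shows "finite E" "\<And>e. e \<in> E \<Longrightarrow> e \<subseteq> V"
proof -
  show sub: "\<And>e. e \<in> E \<Longrightarrow> e \<subseteq> V"
  proof -
    fix e assume "e \<in> E"
    then obtain x y where "x \<in> V" "y \<in> V" "e = {x,y}" using assms unfolding simple_graph_def by blast
    thus "e \<subseteq> V" by simp
  qed
  have "E \<subseteq> Pow V" using sub by blast
  moreover have "finite V" using assms unfolding simple_graph_def by blast
  ultimately show "finite E" by (simp add: finite_subset)
qed

lemma sup_mono:
  assumes fin: "finite (\<Union>G)" and "F \<subseteq> G" and "e \<noteq> {}"
  shows "sup_edge F e \<le> sup_edge G e"
proof -
  obtain a where a: "a \<in> e" using assms(3) by blast
  have "{w. w \<notin> e \<and> (\<forall>x\<in>e. {x, w} \<in> G)} \<subseteq> \<Union>G" using a by blast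
  hence "finite {w. w \<notin> e \<and> (\<forall>x\<in>e. {x, w} \<in> G)}" using fin finite_subset by blast
  thus ?thesis unfolding sup_edge_def
    by (rule card_mono) (use assms(2) in blast)
qed

lemma truss_prop:
  assumes "simple_graph V E" "E' \<subseteq> E"
  shows "k_truss k E' \<subseteq> E' \<and> (\<forall>e\<in>k_truss k E'. k - 2 \<le> sup_edge (k_truss k E') e)"
proof -
  let ?P = "\<lambda>F. F \<subseteq> E' \<and> (\<forall>e\<in>F. k - 2 \<le> sup_edge F e)"
  define U where "U = \<Union>{F. ?P F}"
  have fE: "finite E" and sub: "\<And>e. e \<in> E \<Longrightarrow> e \<subseteq> V" using finE[OF assms(1)] by auto
  have finV: "finite V" using assms(1) unfolding simple_graph_def by blast
  have ne: "\<And>e. e \<in> E \<Longrightarrow> e \<noteq> {}" using assms(1) unfolding simple_graph_def by blast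
  have UE: "U \<subseteq> E'" unfolding U_def by blast
  have "\<Union>U \<subseteq> V" using UE assms(2) sub by blast
  hence finU: "finite (\<Union>U)" using finV by (rule finite_subset)
  have PU: "?P U"
  proof (intro conjI ballI)
    show "U \<subseteq> E'" by (rule UE)
    fix e assume "e \<in> U"
    then obtain F where F: "?P F" "e \<in> F" unfolding U_def by blast
    have FU: "F \<subseteq> U" using F unfolding U_def by blast
    have "e \<in> E" using F assms(2) by blast
    hence "sup_edge F e \<le> sup_edge U e"
      by (rule sup_mono[OF finU FU ne])
    thus "k - 2 \<le> sup_edge U e" using F by force
  qed
  have "?P (Greatest ?P)"
    by (rule GreatestI2_order[of ?P U]) (use PU U_def in auto)
  thus ?thesis unfolding k_truss_def .
qed

theorem mainTheorem4:
  fixes V :: "'a set" and E :: "'a set set" and k :: nat and e0 :: "'a set"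
  assumes "simple_graph V E"
    and "k \<ge> 2"
    and "e0 \<in> E"
    and "edge_trussness V E e0 < k + 1"
  shows "\<forall>v\<in>V. \<forall>S \<in> components (k_truss k (induced_edges E (nbhd E v))).
           e0 \<notin> component_edges (k_truss k (induced_edges E (nbhd E v))) S"
proof (intro ballI notI)
  fix v S
  assume vV: "v \<in> V"
  let ?N = "nbhd E v"
  let ?E' = "induced_edges E ?N"
  let ?T = "k_truss k ?E'"
  assume "e0 \<in> component_edges ?T S"
  hence e0T: "e0 \<in> ?T" unfolding component_edges_def by blast
  have fE: "finite E" and sub: "\<And>e. e \<in> E \<Longrightarrow> e \<subseteq> V" using finE[OF assms(1)] by auto
  have finV: "finite V" using assms(1) unfolding simple_graph_def by blast
  have edge: "\<And>e. e \<in> E \<Longrightarrow> \<exists>x y. x \<noteq> y \<and> x \<in> V \<and> y \<in> V \<and> e = {x, y}"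
    using assms(1) unfolding simple_graph_def by blast
  have E'E: "?E' \<subseteq> E" unfolding induced_edges_def by blast
  have TP: "?T \<subseteq> ?E'" "\<And>e. e \<in> ?T \<Longrightarrow> k - 2 \<le> sup_edge ?T e"
    using truss_prop[OF assms(1) E'E, of k] by auto
  have TE: "?T \<subseteq> E" using TP E'E by blast
  have TN: "\<And>e. e \<in> ?T \<Longrightarrow> e \<subseteq> ?N" using TP(1) unfolding induced_edges_def by blast
  have vN: "v \<notin> ?N"
  proof
    assume "v \<in> ?N"
    hence "{v} \<in> E" unfolding nbhd_def by simp
    thus False using edge by (metis doubleton_eq_iff insert_absorb2 singleton_insert_inj_eq)
  qed
  have vT: "v \<notin> \<Union>?T" using TN vN by blast
  define F' where "F' = ?T \<union> {{v,x} | x. x \<in> \<Union>?T}"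
  have F'E: "F' \<subseteq> E"
  proof -
    have "{v,x} \<in> E" if "x \<in> \<Union>?T" for x
    proof -
      have "x \<in> ?N" using that TN by blast
      thus ?thesis unfolding nbhd_def by simp
    qed
    thus ?thesis unfolding F'_def using TE by blast
  qed
  have finF': "finite F'" using F'E fE by (rule finite_subset)
  have "\<Union>F' \<subseteq> V" using F'E sub by blast
  hence finW: "\<And>A. A \<subseteq> \<Union>F' \<Longrightarrow> finite A"
    using finV by (meson finite_subset subset_trans)
  have key: "k - 1 \<le> sup_edge F' e" if eF: "e \<in> F'" for e
  proof (cases "e \<in> ?T")
    case True
    then obtain x y where xy: "x \<noteq> y" "e = {x,y}" using edge TE by blast
    have xyN: "x \<in> ?N" "y \<in> ?N" using TN True xy by auto
    let ?A = "{w. w \<notin> {x,y} \<and> {x,w} \<in> ?T \<and> {y,w} \<in> ?T}"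
    let ?B = "{w. w \<notin> {x,y} \<and> {x,w} \<in> F' \<and> {y,w} \<in> F'}"
    have "k - 2 \<le> card ?A" using TP(2)[OF True] xy sup_edge_pair by metis
    have vA: "v \<notin> ?A" using vT by blast
    have "insert v ?A \<subseteq> ?B"
    proof -
      have "v \<notin> {x,y}" using xyN vN by auto
      moreover have "x \<in> \<Union>?T" "y \<in> \<Union>?T" using True xy by auto
      hence "{v,x} \<in> F'" "{v,y} \<in> F'" unfolding F'_def by blast+
      hence "{x,v} \<in> F'" "{y,v} \<in> F'" by (simp_all add: insert_commute)
      ultimately show ?thesis unfolding F'_def by auto
    qed
    moreover have "?B \<subseteq> \<Union>F'" by blast
    ultimately have "card (insert v ?A) \<le> card ?B" using finW by (meson card_mono)
    moreover have "finite ?A" using finW \<open>insert v ?A \<subseteq> ?B\<close> \<open>?B \<subseteq> \<Union>F'\<close> by blast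
    ultimately have "card ?A + 1 \<le> card ?B" using vA by simp
    moreover have "sup_edge F' e = card ?B" using xy(2) by (simp only: sup_edge_pair)
    ultimately show ?thesis using \<open>k - 2 \<le> card ?A\<close> assms(2) by linarith
  next
    case False
    then obtain x where x: "x \<in> \<Union>?T" "e = {v,x}" using eF unfolding F'_def by blast
    then obtain f where f: "f \<in> ?T" "x \<in> f" by blast
    then obtain a b where ab: "a \<noteq> b" "f = {a,b}" using edge TE by blast
    obtain y where y: "f = {x,y}" "x \<noteq> y" using ab f by blast
    have yT: "y \<in> \<Union>?T" using f y by blast
    let ?A = "{w. w \<notin> {x,y} \<and> {x,w} \<in> ?T \<and> {y,w} \<in> ?T}"
    let ?B = "{w. w \<notin> {v,x} \<and> {v,w} \<in> F' \<and> {x,w} \<in> F'}"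
    have "k - 2 \<le> card ?A" using TP(2)[OF f(1)] y sup_edge_pair by metis
    have yA: "y \<notin> ?A" by blast
    have "insert y ?A \<subseteq> ?B"
    proof
      fix w assume w: "w \<in> insert y ?A"
      show "w \<in> ?B"
      proof (cases "w = y")
        case True
        have "y \<noteq> v" using yT vT by blast
        moreover have "{v,y} \<in> F'" unfolding F'_def using yT by blast
        moreover have "{x,y} \<in> F'" unfolding F'_def using f y by blast
        ultimately show ?thesis using True y by auto
      next
        case False
        hence wA: "w \<in> ?A" using w by blast
        hence "w \<in> \<Union>?T" by blast
        hence "w \<noteq> v" "{v,w} \<in> F'" using vT unfolding F'_def by blast+
        moreover have "{x,w} \<in> F'" using wA unfolding F'_def by blast
        ultimately show ?thesis using wA by blast
      qed
    qed
    moreover have "?B \<subseteq> \<Union>F'" by blast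
    ultimately have "card (insert y ?A) \<le> card ?B" using finW by (meson card_mono)
    moreover have "finite ?A" using finW \<open>insert y ?A \<subseteq> ?B\<close> \<open>?B \<subseteq> \<Union>F'\<close> by blast
    ultimately have "card ?A + 1 \<le> card ?B" using yA by simp
    moreover have "sup_edge F' e = card ?B" using x(2) by (simp only: sup_edge_pair)
    ultimately show ?thesis using \<open>k - 2 \<le> card ?A\<close> assms(2) by linarith
  qed
  have e0F': "e0 \<in> F'" unfolding F'_def using e0T by blast
  have "Min (sup_edge F' ` F') \<in> sup_edge F' ` F'" using finF' e0F' by (intro Min_in) auto
  then have "k + 1 \<le> trussness F'" unfolding trussness_def using key assms(2) by force
  moreover have "subgraph V E V F'" unfolding subgraph_def using F'E sub vV by blast
  moreover have "finite {trussness F | W F. subgraph V E W F \<and> e0 \<in> F}"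
  proof -
    have "{trussness F | W F. subgraph V E W F \<and> e0 \<in> F} \<subseteq> trussness ` Pow E"
      unfolding subgraph_def by blast
    moreover have "finite (trussness ` Pow E)" using fE by simp
    ultimately show ?thesis by (rule finite_subset)
  qed
  ultimately have "trussness F' \<le> edge_trussness V E e0"
    unfolding edge_trussness_def using e0F' by (intro Max_ge) blast+
  thus False using assms(4) \<open>k + 1 \<le> trussness F'\<close> by linarith
qed

end
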